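(* Let $N\ge1$, $m\ge2$, and consider discrete-time agents $x_i[k+1]=Ax_i[k]+Bu_i[k]$, $y_i[k]=Cx_i[k]$, $i=1,\dots,N$, with $A,B$ the $m$-th order integrator matrices and $C\in\mathbb{R}^{1\times m}$. Apply the protocol $$u_i[k]=K_4z_i[k]-\frac{1}{1+\sum_{j\in\mathcal{N}_i(\sigma[k])}\alpha^{ij}_{\sigma[k]}}\sum_{j\in\mathcal{N}_i(\sigma[k])}\alpha^{ij}_{\sigma[k]}K_5\big(z_i[k]-z_j[k]\big),$$ $$z_i[k+1]=(A+K_6C)z_i[k]+Bu_i[k]-K_6y_i[k],$$ where $K_4=(b_1,\,b_2-b_1,\,\dots,\,b_{m-1}-b_{m-2},\,1-b_{m-1})$, $K_5=(b_1,b_2,\dots,b_{m-1},1)$, $b_1,\dots,b_{m-1}\in\mathbb{R}$, and $K_6\in\mathbb{R}^{m\times1}$. Suppose that $\mathcal{G}_{\sigma[k]}$ is uniformly jointly quasi-strongly connected in the discrete-time sense, every eigenvalue of $A+K_6C$ has modulus strictly less than $1$, and every root of $s^{m-1}+b_{m-1}s^{m-2}+\cdots+b_2s+b_1=0$ has modulus strictly less than $1$. Then for all initial conditions $x_i[0],z_i[0]\in\mathbb{R}^m$ there exists $x^*\in\mathbb{R}^m$ such that $\lim_{k\to\infty}x_i[k]=x^*$ for all $i=1,\dots,N$.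
   Context: $A\in\mathbb{R}^{m\times m}$ has ones on the superdiagonal and zeros elsewhere; $B=(0,\dots,0,1)^T$. Graphs: nodes $v_1,\dots,v_N$; edge $e_{ij}$ from $v_j$ to $v_i$ means agent $i$ receives information from agent $j$; no self-edges; a finite index set $\mathcal{S}$ of digraphs, graph $\mathcal{G}_q$ having fixed weights $\alpha^{ij}_q>0$ on its edges ($0$ otherwise), $\mathcal{N}_i(q)=\{j:e_{ij}\in\mathcal{G}_q\}$; $\sigma:\{0,1,2,\dots\}\to\mathcal{S}$ is the switching sequence. A digraph is quasi-strongly connected if some node has a directed path (sequence of distinct nodes following edge directions) to every other node. $\mathcal{G}_{\sigma[k]}$ is uniformly jointly quasi-strongly connected in the discrete-time sense if there is an integer $M>0$ such that for every $k\ge0$ the graph with edge set $\bigcup_{i=k}^{k+M}\mathcal{E}(\mathcal{G}_{\sigma[i]})$ is quasi-strongly connected. *)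

theory Defs
  imports Complex_Main "Jordan_Normal_Form.Char_Poly"
begin

definition int_A :: "nat \<Rightarrow> real mat" where
  "int_A m = mat m m (\<lambda>(a, b). if b = a + 1 then 1 else 0)"

definition int_B :: "nat \<Rightarrow> real vec" where
  "int_B m = vec m (\<lambda>a. if a = m - 1 then 1 else 0)"

(* K5 = (b_1, ..., b_{m-1}, 1), b indexed from 1 *)
definition gainK5 :: "nat \<Rightarrow> (nat \<Rightarrow> real) \<Rightarrow> real vec" where
  "gainK5 m b = vec m (\<lambda>l. if l = m - 1 then 1 else b (l + 1))"

definition gainK4 :: "nat \<Rightarrow> (nat \<Rightarrow> real) \<Rightarrow> real vec" where
  "gainK4 m b = vec m (\<lambda>l. if l = 0 then b 1
                             else if l = m - 1 then 1 - b (m - 1)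
                             else b (l + 1) - b l)"

definition char_b :: "nat \<Rightarrow> (nat \<Rightarrow> real) \<Rightarrow> complex poly" where
  "char_b m b = monom 1 (m - 1) + (\<Sum>l<m - 1. monom (complex_of_real (b (l + 1))) l)"

definition dpath :: "(nat \<times> nat) set \<Rightarrow> nat \<Rightarrow> nat \<Rightarrow> bool" where
  "dpath E u v = (\<exists>ps. ps \<noteq> [] \<and> hd ps = u \<and> last ps = v \<and> distinct ps \<and>
                     (\<forall>l. Suc l < length ps \<longrightarrow> (ps ! l, ps ! Suc l) \<in> E))"

definition quasi_strongly_connected :: "nat \<Rightarrow> (nat \<times> nat) set \<Rightarrow> bool" where
  "quasi_strongly_connected N E = (\<exists>r<N. \<forall>v<N. v \<noteq> r \<longrightarrow> dpath E r v)"

(* alpha q i j > 0 iff edge e_ij (from v_j to v_i) is in G_q *)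
definition union_edges ::
  "nat \<Rightarrow> ('q \<Rightarrow> nat \<Rightarrow> nat \<Rightarrow> real) \<Rightarrow> (nat \<Rightarrow> 'q) \<Rightarrow> nat \<Rightarrow> nat \<Rightarrow> (nat \<times> nat) set" where
  "union_edges N \<alpha> \<sigma> k M = {(j, i). i < N \<and> j < N \<and> (\<exists>l\<in>{k..k + M}. \<alpha> (\<sigma> l) i j > 0)}"

definition UJQSC :: "nat \<Rightarrow> ('q \<Rightarrow> nat \<Rightarrow> nat \<Rightarrow> real) \<Rightarrow> (nat \<Rightarrow> 'q) \<Rightarrow> bool" where
  "UJQSC N \<alpha> \<sigma> = (\<exists>M::nat. M > 0 \<and> (\<forall>k. quasi_strongly_connected N (union_edges N \<alpha> \<sigma> k M)))"

definition nbrs :: "nat \<Rightarrow> ('q \<Rightarrow> nat \<Rightarrow> nat \<Rightarrow> real) \<Rightarrow> 'q \<Rightarrow> nat \<Rightarrow> nat set" where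
  "nbrs N \<alpha> q i = {j. j < N \<and> \<alpha> q i j > 0}"

end

theory Submission
  imports Defs "Jordan_Normal_Form.Spectral_Radius" "HOL-Computational_Algebra.Fundamental_Theorem_Algebra"
begin


lemma path_exit:
  assumes "ps \<noteq> []" "hd ps \<in> I" "last ps \<notin> I"
    "\<forall>l. Suc l < length ps \<longrightarrow> (ps ! l, ps ! Suc l) \<in> E"
  shows "\<exists>a b. (a,b) \<in> E \<and> a \<in> I \<and> b \<notin> I"
  using assms
proof (induction ps)
  case Nil thus ?case by simp
next
  case (Cons p ps)
  show ?case
  proof (cases ps)
    case Nil with Cons.prems show ?thesis by simp
  next
    case (Cons q qs)
    have e: "(p, q) \<in> E" using Cons.prems(4) Cons by fastforce
    show ?thesis
    proof (cases "q \<in> I")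
      case True
      have edges: "\<forall>l. Suc l < length ps \<longrightarrow> (ps ! l, ps ! Suc l) \<in> E"
      proof (intro allI impI)
        fix l assume "Suc l < length ps"
        hence "Suc (Suc l) < length (p # ps)" by simp
        with Cons.prems(4) have "((p#ps) ! Suc l, (p#ps) ! Suc (Suc l)) \<in> E" by blast
        thus "(ps ! l, ps ! Suc l) \<in> E" by simp
      qed
      show ?thesis
        by (rule Cons.IH) (use Cons.prems Cons True edges in auto)
    next
      case False
      with e Cons.prems show ?thesis by auto
    qed
  qed
qed

lemma top_persist:
  fixes V :: "nat \<Rightarrow> nat \<Rightarrow> real" and Mx Dd :: "nat \<Rightarrow> real"
  assumes up: "\<And>k i j. i<N \<Longrightarrow> j<N \<Longrightarrow> j = i \<or> Ed k j i \<Longrightarrow>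
        V i (Suc k) \<le> \<beta> * V j k + (1-\<beta>) * Mx k + Dd k"
    and bnd: "\<And>t. t \<ge> k0 \<Longrightarrow> Mx t \<le> H + sum Dd {k0..<t}"
    and b0: "0 \<le> \<beta>" "\<beta> \<le> 1"
    and t: "t \<ge> k0" and ij: "i<N" "j<N" "j = i \<or> Ed t j i"
    and vj: "V j t \<le> H + sum Dd {k0..<t} - \<delta>"
  shows "V i (Suc t) \<le> H + sum Dd {k0..<Suc t} - \<beta>*\<delta>"
proof -
  have s: "sum Dd {k0..<Suc t} = sum Dd {k0..<t} + Dd t" using t by simp
  have 1: "V i (Suc t) \<le> \<beta> * V j t + (1-\<beta>) * Mx t + Dd t" using up ij by blast
  have 2: "\<beta> * V j t \<le> \<beta> * (H + sum Dd {k0..<t} - \<delta>)" using vj b0 by (simp add: mult_left_mono)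
  have 3: "(1-\<beta>) * Mx t \<le> (1-\<beta>) * (H + sum Dd {k0..<t})" using bnd[OF t] b0 by (simp add: mult_left_mono)
  from 1 2 3 s show ?thesis by (simp add: algebra_simps)
qed

lemma top_iter:
  fixes V :: "nat \<Rightarrow> nat \<Rightarrow> real" and Mx Dd :: "nat \<Rightarrow> real"
  assumes up: "\<And>k i j. i<N \<Longrightarrow> j<N \<Longrightarrow> j = i \<or> Ed k j i \<Longrightarrow>
        V i (Suc k) \<le> \<beta> * V j k + (1-\<beta>) * Mx k + Dd k"
    and bnd: "\<And>t. t \<ge> k0 \<Longrightarrow> Mx t \<le> H + sum Dd {k0..<t}"
    and b0: "0 \<le> \<beta>" "\<beta> \<le> 1"
    and t: "t \<ge> k0" and i: "i<N"
    and vi: "V i t \<le> H + sum Dd {k0..<t} - \<delta>"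
  shows "V i (t+s) \<le> H + sum Dd {k0..<t+s} - \<beta>^s*\<delta>"
proof (induction s)
  case 0 thus ?case using vi by simp
next
  case (Suc s)
  have "V i (Suc (t+s)) \<le> H + sum Dd {k0..<Suc (t+s)} - \<beta>*(\<beta>^s*\<delta>)"
    by (rule top_persist[OF up bnd b0, where t="t+s" and i=i and j=i]) (use t i Suc in auto)
  thus ?case by (simp add: mult.assoc)
qed

lemma top_window:
  fixes V :: "nat \<Rightarrow> nat \<Rightarrow> real" and Mx Dd :: "nat \<Rightarrow> real"
  assumes up: "\<And>k i j. i<N \<Longrightarrow> j<N \<Longrightarrow> j = i \<or> Ed k j i \<Longrightarrow>
        V i (Suc k) \<le> \<beta> * V j k + (1-\<beta>) * Mx k + Dd k"
    and bnd: "\<And>t. t \<ge> k0 \<Longrightarrow> Mx t \<le> H + sum Dd {k0..<t}"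
    and b0: "0 \<le> \<beta>" "\<beta> \<le> 1"
    and t: "t \<ge> k0" and I: "I \<subseteq> {..<N}" "I \<noteq> {..<N}"
    and vI: "\<forall>i\<in>I. V i t \<le> H + sum Dd {k0..<t} - \<delta>"
    and r: "r \<in> I" "\<forall>v<N. v \<noteq> r \<longrightarrow> dpath {(j,i). i<N \<and> j<N \<and> (\<exists>l\<in>{t..t+M}. Ed l j i)} r v"
  shows "\<exists>b<N. b \<notin> I \<and> (\<forall>i\<in>insert b I. V i (t + Suc M) \<le> H + sum Dd {k0..<t + Suc M} - \<beta>^Suc M * \<delta>)"
proof -
  let ?E = "{(j,i). i<N \<and> j<N \<and> (\<exists>l\<in>{t..t+M}. Ed l j i)}"
  obtain v where v: "v < N" "v \<notin> I" using I by auto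
  have "v \<noteq> r" using v r by auto
  with r v have "dpath ?E r v" by auto
  then obtain ps where ps: "ps \<noteq> []" "hd ps = r" "last ps = v"
    "\<forall>l. Suc l < length ps \<longrightarrow> (ps ! l, ps ! Suc l) \<in> ?E" unfolding dpath_def by blast
  from path_exit[OF ps(1) _ _ ps(4), of I] ps r v
  obtain a b where ab: "(a,b) \<in> ?E" "a \<in> I" "b \<notin> I" by auto
  then obtain l where l: "l \<in> {t..t+M}" "Ed l a b" "a < N" "b < N" by auto
  have va: "V a (t + (l - t)) \<le> H + sum Dd {k0..<t + (l-t)} - \<beta>^(l-t)*\<delta>"
    by (rule top_iter[OF up bnd b0 t]) (use ab I vI in auto)
  hence va': "V a l \<le> H + sum Dd {k0..<l} - \<beta>^(l-t)*\<delta>" using l by simp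
  have vb: "V b (Suc l) \<le> H + sum Dd {k0..<Suc l} - \<beta>*(\<beta>^(l-t)*\<delta>)"
    by (rule top_persist[OF up bnd b0, where t=l and i=b and j=a]) (use l t va' in auto)
  have vb2: "V b (Suc l + (M - (l-t))) \<le> H + sum Dd {k0..<Suc l + (M - (l-t))} - \<beta>^(M - (l-t))*(\<beta>*(\<beta>^(l-t)*\<delta>))"
    by (rule top_iter[OF up bnd b0, where t="Suc l" and i=b]) (use l t vb in auto)
  have eq: "Suc l + (M - (l-t)) = t + Suc M" using l by auto
  have eq2: "\<beta>^(M - (l-t))*(\<beta>*(\<beta>^(l-t)*\<delta>)) = \<beta>^Suc M * \<delta>"
  proof -
    have "\<beta>^(M - (l-t))*(\<beta>*(\<beta>^(l-t)*\<delta>)) = \<beta>^(Suc ((M - (l-t)) + (l-t))) * \<delta>"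
      by (simp add: power_add mult_ac)
    also have "Suc ((M - (l-t)) + (l-t)) = Suc M" using l by auto
    finally show ?thesis .
  qed
  have "\<forall>i\<in>insert b I. V i (t + Suc M) \<le> H + sum Dd {k0..<t + Suc M} - \<beta>^Suc M * \<delta>"
  proof
    fix i assume "i \<in> insert b I"
    then consider "i = b" | "i \<in> I" by auto
    thus "V i (t + Suc M) \<le> H + sum Dd {k0..<t + Suc M} - \<beta>^Suc M * \<delta>"
    proof cases
      case 1 thus ?thesis using vb2 unfolding eq eq2 by simp
    next
      case 2 show ?thesis
        by (rule top_iter[OF up bnd b0 t]) (use 2 I vI in auto)
    qed
  qed
  thus ?thesis using ab l by auto
qed



lemma consensus:
  fixes V :: "nat \<Rightarrow> nat \<Rightarrow> real" and Dd :: "nat \<Rightarrow> real" and Ed :: "nat \<Rightarrow> nat \<Rightarrow> nat \<Rightarrow> bool" and N M :: nat and \<beta> :: real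
  defines "Mx \<equiv> \<lambda>k. Max ((\<lambda>i. V i k) ` {..<N})" and "Mn \<equiv> \<lambda>k. Min ((\<lambda>i. V i k) ` {..<N})"
  assumes N: "N \<ge> 1" and b0: "0 < \<beta>" "\<beta> \<le> 1" and D: "\<And>k. Dd k \<ge> 0" "summable Dd"
    and up: "\<And>k i j. i<N \<Longrightarrow> j<N \<Longrightarrow> j = i \<or> Ed k j i \<Longrightarrow>
        V i (Suc k) \<le> \<beta> * V j k + (1-\<beta>) * Mx k + Dd k"
    and lo: "\<And>k i j. i<N \<Longrightarrow> j<N \<Longrightarrow> j = i \<or> Ed k j i \<Longrightarrow>
        V i (Suc k) \<ge> \<beta> * V j k + (1-\<beta>) * Mn k - Dd k"
    and conn: "\<And>k. quasi_strongly_connected N {(j,i). i<N \<and> j<N \<and> (\<exists>l\<in>{k..k+M}. Ed l j i)}"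
  shows "\<exists>U. \<forall>i<N. (\<lambda>k. V i k) \<longlonglongrightarrow> U"
proof -
  have fin: "\<And>k. finite ((\<lambda>i. V i k) ` {..<N})" by simp
  have ne: "\<And>k. (\<lambda>i. V i k) ` {..<N} \<noteq> {}"
  proof -
    have "0 \<in> {..<N}" using N by simp
    thus "\<And>k. (\<lambda>i. V i k) ` {..<N} \<noteq> {}" by blast
  qed
  have Mx_ge: "\<And>i k. i < N \<Longrightarrow> V i k \<le> Mx k" unfolding Mx_def using fin by (intro Max_ge) auto
  have Mn_le: "\<And>i k. i < N \<Longrightarrow> Mn k \<le> V i k" unfolding Mn_def using fin by (intro Min_le) auto
  have Mx_le: "\<And>k c. (\<And>i. i<N \<Longrightarrow> V i k \<le> c) \<Longrightarrow> Mx k \<le> c"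
    unfolding Mx_def using fin ne by (subst Max_le_iff) auto
  have Mn_ge: "\<And>k c. (\<And>i. i<N \<Longrightarrow> c \<le> V i k) \<Longrightarrow> c \<le> Mn k"
    unfolding Mn_def using fin ne by (subst Min_ge_iff) auto
  have b0': "0 \<le> \<beta>" using b0 by simp
  have up': "\<And>k i j. i<N \<Longrightarrow> j<N \<Longrightarrow> j = i \<or> Ed k j i \<Longrightarrow>
        - V i (Suc k) \<le> \<beta> * (- V j k) + (1-\<beta>) * (- Mn k) + Dd k"
    using lo by (simp add: algebra_simps)
  have MxS: "Mx (Suc t) \<le> Mx t + Dd t" for t
  proof (rule Mx_le)
    fix i assume i: "i < N"
    have "V i (Suc t) \<le> \<beta> * V i t + (1-\<beta>) * Mx t + Dd t" using up i by blast
    also have "\<beta> * V i t \<le> \<beta> * Mx t" using Mx_ge[OF i] b0 by (simp add: mult_left_mono)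
    finally show "V i (Suc t) \<le> Mx t + Dd t" by (simp add: algebra_simps)
  qed
  have MnS: "Mn (Suc t) \<ge> Mn t - Dd t" for t
  proof (rule Mn_ge)
    fix i assume i: "i < N"
    have "\<beta> * Mn t \<le> \<beta> * V i t" using Mn_le[OF i] b0 by (simp add: mult_left_mono)
    hence "Mn t - Dd t \<le> \<beta> * V i t + (1-\<beta>) * Mn t - Dd t" by (simp add: algebra_simps)
    also have "\<dots> \<le> V i (Suc t)" using lo i by blast
    finally show "Mn t - Dd t \<le> V i (Suc t)" .
  qed
  have bndMx: "Mx t \<le> Mx k0 + sum Dd {k0..<t}" if "t \<ge> k0" for t k0
  proof -
    have "Mx (k0 + n) \<le> Mx k0 + sum Dd {k0..<k0+n}" for n
    proof (induction n)
      case 0 thus ?case by simp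
    next
      case (Suc n)
      have "Mx (k0 + Suc n) \<le> Mx (k0+n) + Dd (k0+n)" using MxS by simp
      thus ?case using Suc by simp
    qed
    from this[of "t - k0"] that show ?thesis by simp
  qed
  have bndMn: "Mn t \<ge> Mn k0 - sum Dd {k0..<t}" if "t \<ge> k0" for t k0
  proof -
    have "Mn (k0 + n) \<ge> Mn k0 - sum Dd {k0..<k0+n}" for n
    proof (induction n)
      case 0 thus ?case by simp
    next
      case (Suc n)
      have "Mn (k0 + Suc n) \<ge> Mn (k0+n) - Dd (k0+n)" using MnS by simp
      thus ?case using Suc by simp
    qed
    from this[of "t - k0"] that show ?thesis by simp
  qed
  define L where "L = N * Suc M"
  define \<rho> where "\<rho> = 1 - \<beta>^L / 2"
  have spread: "Mx (k0+L) - Mn (k0+L) \<le> \<rho> * (Mx k0 - Mn k0) + 2 * sum Dd {k0..<k0+L}" for k0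
  proof -
    define hi where "hi = Mx k0"
    define lw where "lw = Mn k0"
    define S where "S = hi - lw"
    define E where "E = (\<lambda>t. sum Dd {k0..<t})"
    define Et where "Et = (\<lambda>t. {(j,i). i<N \<and> j<N \<and> (\<exists>l\<in>{t..t+M}. Ed l j i)})"
    have bT: "\<And>t. t \<ge> k0 \<Longrightarrow> Mx t \<le> hi + sum Dd {k0..<t}" using bndMx unfolding hi_def by blast
    have bB: "\<And>t. t \<ge> k0 \<Longrightarrow> (\<lambda>k. - Mn k) t \<le> - lw + sum Dd {k0..<t}" 
    proof -
      fix t assume "t \<ge> k0"
      from bndMn[OF this] show "(\<lambda>k. - Mn k) t \<le> - lw + sum Dd {k0..<t}" unfolding lw_def by simp
    qed
    have topI: "\<And>t i s \<delta>. t \<ge> k0 \<Longrightarrow> i<N \<Longrightarrow> V i t \<le> hi + E t - \<delta> \<Longrightarrow>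
         V i (t+s) \<le> hi + E (t+s) - \<beta>^s*\<delta>"
      unfolding E_def by (rule top_iter[OF up bT b0' b0(2)])
    have botI: "\<And>t i s \<delta>. t \<ge> k0 \<Longrightarrow> i<N \<Longrightarrow> - V i t \<le> - lw + E t - \<delta> \<Longrightarrow>
         - V i (t+s) \<le> - lw + E (t+s) - \<beta>^s*\<delta>"
      unfolding E_def
      by (rule top_iter[where V="\<lambda>i k. - V i k" and Mx="\<lambda>k. - Mn k", OF up' bB b0' b0(2)])
    have topW: "\<And>t I \<delta> r. t \<ge> k0 \<Longrightarrow> I \<subseteq> {..<N} \<Longrightarrow> I \<noteq> {..<N} \<Longrightarrow>
         \<forall>i\<in>I. V i t \<le> hi + E t - \<delta> \<Longrightarrow> r \<in> I \<Longrightarrow> \<forall>v<N. v \<noteq> r \<longrightarrow> dpath (Et t) r v \<Longrightarrow>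
         \<exists>b<N. b \<notin> I \<and> (\<forall>i\<in>insert b I. V i (t + Suc M) \<le> hi + E (t + Suc M) - \<beta>^Suc M * \<delta>)"
      unfolding E_def Et_def by (rule top_window[OF up bT b0' b0(2)])
    have botW: "\<And>t I \<delta> r. t \<ge> k0 \<Longrightarrow> I \<subseteq> {..<N} \<Longrightarrow> I \<noteq> {..<N} \<Longrightarrow>
         \<forall>i\<in>I. - V i t \<le> - lw + E t - \<delta> \<Longrightarrow> r \<in> I \<Longrightarrow> \<forall>v<N. v \<noteq> r \<longrightarrow> dpath (Et t) r v \<Longrightarrow>
         \<exists>b<N. b \<notin> I \<and> (\<forall>i\<in>insert b I. - V i (t + Suc M) \<le> - lw + E (t + Suc M) - \<beta>^Suc M * \<delta>)"
      unfolding E_def Et_def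
      by (rule top_window[where V="\<lambda>i k. - V i k" and Mx="\<lambda>k. - Mn k", OF up' bB b0' b0(2)])
    define tn where "tn = (\<lambda>n::nat. k0 + n * Suc M)"
    define dn where "dn = (\<lambda>n::nat. \<beta>^(n * Suc M) * (S/2))"
    have tnS: "tn (Suc n) = tn n + Suc M" for n unfolding tn_def by simp
    have dnS: "dn (Suc n) = \<beta>^Suc M * dn n" for n
      unfolding dn_def by (simp add: power_add mult_ac)
    have tn0: "tn n \<ge> k0" for n unfolding tn_def by simp
    have inv: "\<exists>T B. T \<subseteq> {..<N} \<and> B \<subseteq> {..<N} \<and> T \<union> B = {..<N} \<and>
        (\<forall>i\<in>T. V i (tn n) \<le> hi + E (tn n) - dn n) \<and>
        (\<forall>i\<in>B. - V i (tn n) \<le> - lw + E (tn n) - dn n) \<and>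
        (T = {..<N} \<or> B = {..<N} \<or> N + n \<le> card T + card B)" for n
    proof (induction n)
      case 0
      define T where "T = {i\<in>{..<N}. V i k0 \<le> hi - S/2}"
      define B where "B = {i\<in>{..<N}. - V i k0 \<le> - lw - S/2}"
      have U: "T \<union> B = {..<N}" unfolding T_def B_def S_def by (auto simp: field_simps)
      have "N \<le> card T + card B"
        using card_Un_le[of T B] U by simp
      moreover have "\<forall>i\<in>T. V i (tn 0) \<le> hi + E (tn 0) - dn 0"
        unfolding T_def tn_def dn_def E_def by simp
      moreover have "\<forall>i\<in>B. - V i (tn 0) \<le> - lw + E (tn 0) - dn 0"
        unfolding B_def tn_def dn_def E_def by simp
      ultimately show ?case using U by (intro exI[of _ T] exI[of _ B]) auto
    next
      case (Suc n)
      then obtain T B where TB: "T \<subseteq> {..<N}" "B \<subseteq> {..<N}" "T \<union> B = {..<N}"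
        "\<forall>i\<in>T. V i (tn n) \<le> hi + E (tn n) - dn n"
        "\<forall>i\<in>B. - V i (tn n) \<le> - lw + E (tn n) - dn n"
        "T = {..<N} \<or> B = {..<N} \<or> N + n \<le> card T + card B" by blast
      let ?t = "tn n"
      have pT: "\<forall>i\<in>T. V i (tn (Suc n)) \<le> hi + E (tn (Suc n)) - dn (Suc n)"
        unfolding tnS dnS using TB(1,4) topI[OF tn0] by blast
      have pB: "\<forall>i\<in>B. - V i (tn (Suc n)) \<le> - lw + E (tn (Suc n)) - dn (Suc n)"
        unfolding tnS dnS using TB(2,5) botI[OF tn0] by blast
      from conn[of ?t] obtain r where r: "r < N" "\<forall>v<N. v \<noteq> r \<longrightarrow> dpath (Et ?t) r v"
        unfolding quasi_strongly_connected_def Et_def by blast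
      show ?case
      proof (cases "T = {..<N} \<or> B = {..<N}")
        case True
        thus ?thesis using TB pT pB by blast
      next
        case False
        hence card: "N + n \<le> card T + card B" using TB(6) by blast
        have fT: "finite T" "finite B" using TB(1,2) finite_subset by (blast intro: finite_lessThan)+
        show ?thesis
        proof (cases "r \<in> T")
          case True
          from topW[OF tn0 TB(1) _ TB(4) True r(2)] False obtain b where
            b: "b < N" "b \<notin> T" "\<forall>i\<in>insert b T. V i (tn (Suc n)) \<le> hi + E (tn (Suc n)) - dn (Suc n)"
            unfolding tnS dnS by blast
          have "card (insert b T) = Suc (card T)" using b fT by simp
          thus ?thesis using TB b pB card
            by (intro exI[of _ "insert b T"] exI[of _ B]) auto
        next
          case rF: False
          hence rB: "r \<in> B" using TB(3) r(1) by blast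
          from botW[OF tn0 TB(2) _ TB(5) rB r(2)] False obtain b where
            b: "b < N" "b \<notin> B" "\<forall>i\<in>insert b B. - V i (tn (Suc n)) \<le> - lw + E (tn (Suc n)) - dn (Suc n)"
            unfolding tnS dnS by blast
          have "card (insert b B) = Suc (card B)" using b fT by simp
          thus ?thesis using TB b pT card
            by (intro exI[of _ T] exI[of _ "insert b B"]) auto
        qed
      qed
    qed
    from inv[of N] obtain T B where TB: "T \<subseteq> {..<N}" "B \<subseteq> {..<N}" "T \<union> B = {..<N}"
        "\<forall>i\<in>T. V i (tn N) \<le> hi + E (tn N) - dn N"
        "\<forall>i\<in>B. - V i (tn N) \<le> - lw + E (tn N) - dn N"
        "T = {..<N} \<or> B = {..<N} \<or> N + N \<le> card T + card B" by blast
    have tnN: "tn N = k0 + L" unfolding tn_def L_def by simp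
    have dnN: "dn N = \<beta>^L * (S/2)" unfolding dn_def L_def by simp
    have "T = {..<N} \<or> B = {..<N}"
    proof (rule ccontr)
      assume a: "\<not> (T = {..<N} \<or> B = {..<N})"
      hence c: "N + N \<le> card T + card B" using TB(6) by blast
      have "card T \<le> N" "card B \<le> N" using TB(1,2) card_mono[of "{..<N}"] by fastforce+
      hence "card T = card {..<N}" using c by simp
      hence "T = {..<N}" using TB(1) by (intro card_subset_eq) auto
      thus False using a by blast
    qed
    moreover have e: "E (k0 + L) = sum Dd {k0..<k0+L}" unfolding E_def by simp
    moreover have "Mn (k0+L) \<ge> lw - E (k0+L)" using bndMn[of k0 "k0+L"] unfolding lw_def E_def by simp
    moreover have "Mx (k0+L) \<le> hi + E (k0+L)" using bndMx[of k0 "k0+L"] unfolding hi_def E_def by simp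
    moreover have "T = {..<N} \<Longrightarrow> Mx (k0+L) \<le> hi + E (k0+L) - \<beta>^L * (S/2)"
      using TB(4) tnN dnN by (intro Mx_le) auto
    moreover have "B = {..<N} \<Longrightarrow> Mn (k0+L) \<ge> lw - E (k0+L) + \<beta>^L * (S/2)"
      using TB(5) tnN dnN by (intro Mn_ge) force
    ultimately show ?thesis unfolding \<rho>_def S_def hi_def lw_def by (auto simp: algebra_simps)
  qed
  define tl where "tl = (\<lambda>k. suminf Dd - sum Dd {..<k})"
  have tl0: "tl \<longlonglongrightarrow> 0"
    unfolding tl_def using tendsto_diff[OF tendsto_const[of "suminf Dd"] summable_LIMSEQ[OF D(2)]] by simp
  have tlnn: "tl k \<ge> 0" for k unfolding tl_def using sum_le_suminf[OF D(2), of "{..<k}"] D(1) by simp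
  have tlS: "tl k = tl (Suc k) + Dd k" for k unfolding tl_def by simp
  have tlsum: "sum Dd {k0..<t} = tl k0 - tl t" if "k0 \<le> t" for k0 t
    unfolding tl_def using sum_diff_nat_ivl[of 0 k0 t Dd] that by (simp add: lessThan_atLeast0)
  have sumbnd: "sum Dd {0..<k} \<le> suminf Dd" for k
    using sum_le_suminf[OF D(2), of "{0..<k}"] D(1) by simp
  have MnMx: "Mn k \<le> Mx k" for k using Mn_le[of 0 k] Mx_ge[of 0 k] N by simp
  have dec: "decseq (\<lambda>k. Mx k + tl k)"
    unfolding decseq_Suc_iff
  proof
    fix k show "Mx (Suc k) + tl (Suc k) \<le> Mx k + tl k" using MxS[of k] tlS[of k] by linarith
  qed
  have lb: "\<forall>k. Mn 0 - suminf Dd \<le> Mx k + tl k"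
    proof
    fix k have "Mn k \<ge> Mn 0 - sum Dd {0..<k}" using bndMn[of 0 k] by simp
    thus "Mn 0 - suminf Dd \<le> Mx k + tl k" using MnMx[of k] tlnn[of k] sumbnd[of k] by linarith
  qed
  obtain UU where UU: "(\<lambda>k. Mx k + tl k) \<longlonglongrightarrow> UU" using decseq_convergent[OF dec lb] by blast
  have inc: "incseq (\<lambda>k. Mn k - tl k)"
    unfolding incseq_Suc_iff
  proof
    fix k show "Mn k - tl k \<le> Mn (Suc k) - tl (Suc k)" using MnS[of k] tlS[of k] by linarith
  qed
  have ub: "\<forall>k. Mn k - tl k \<le> Mx 0 + suminf Dd"
    proof
    fix k have "Mx k \<le> Mx 0 + sum Dd {0..<k}" using bndMx[of 0 k] by simp
    thus "Mn k - tl k \<le> Mx 0 + suminf Dd" using MnMx[of k] tlnn[of k] sumbnd[of k] by linarith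
  qed
  obtain LL where LL: "(\<lambda>k. Mn k - tl k) \<longlonglongrightarrow> LL" using incseq_convergent[OF inc ub] by blast
  have MxL: "Mx \<longlonglongrightarrow> UU" using tendsto_diff[OF UU tl0] by simp
  have MnL: "Mn \<longlonglongrightarrow> LL" using tendsto_add[OF LL tl0] by simp
  have s0: "LL \<le> UU" using LIMSEQ_le[OF MnL MxL] MnMx by auto
  have lhs: "(\<lambda>k. Mx (k+L) - Mn (k+L)) \<longlonglongrightarrow> UU - LL"
    using tendsto_diff[OF LIMSEQ_ignore_initial_segment[OF MxL, of L] LIMSEQ_ignore_initial_segment[OF MnL, of L]] .
  have rhs: "(\<lambda>k. \<rho> * (Mx k - Mn k) + 2 * (tl k - tl (k+L))) \<longlonglongrightarrow> \<rho> * (UU - LL) + 2 * (0 - 0)"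
    by (intro tendsto_intros MxL MnL tl0 LIMSEQ_ignore_initial_segment[OF tl0])
  have "UU - LL \<le> \<rho> * (UU - LL) + 2 * (0 - 0)"
  proof (rule LIMSEQ_le[OF lhs rhs])
    show "\<exists>N. \<forall>n\<ge>N. Mx (n + L) - Mn (n + L) \<le> \<rho> * (Mx n - Mn n) + 2 * (tl n - tl (n + L))"
      using spread tlsum by (metis add.commute le_add2)
  qed
  moreover have "\<rho> < 1" unfolding \<rho>_def using b0 by simp
  ultimately have "UU = LL"
  proof -
    assume h1: "UU - LL \<le> \<rho> * (UU - LL) + 2 * (0 - 0)" and h2: "\<rho> < 1"
    have "(1 - \<rho>) * (UU - LL) \<le> 0" using h1 by (simp add: algebra_simps)
    moreover have "1 - \<rho> > 0" using h2 by simp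
    ultimately have "UU - LL \<le> 0" by (simp add: mult_le_0_iff)
    thus ?thesis using s0 by simp
  qed
  have "\<forall>i<N. (\<lambda>k. V i k) \<longlonglongrightarrow> UU"
  proof (intro allI impI)
    fix i assume i: "i < N"
    show "(\<lambda>k. V i k) \<longlonglongrightarrow> UU"
      by (rule tendsto_sandwich[of Mn _ _ Mx]) (use i Mn_le Mx_ge MnL MxL \<open>UU = LL\<close> in auto)
  qed
  thus ?thesis by blast
qed



lemma contract_to_zero:
  fixes a \<epsilon> :: "nat \<Rightarrow> real"
  assumes rec: "\<And>k. a (Suc k) \<le> r * a k + \<epsilon> k" and nn: "\<And>k. a k \<ge> 0"
    and r: "0 \<le> r" "r < 1" and eps: "\<epsilon> \<longlonglongrightarrow> 0"
  shows "a \<longlonglongrightarrow> 0"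
proof (rule LIMSEQ_I)
  fix e :: real assume e: "e > 0"
  have "(1-r)*e/2 > 0" using e r by simp
  from eps[THEN LIMSEQ_D, OF this] obtain K where K: "\<And>k. k \<ge> K \<Longrightarrow> norm (\<epsilon> k) < (1-r)*e/2"
    by auto
  have ind: "a (K+n) \<le> r^n * a K + e/2" for n
  proof (induction n)
    case 0 thus ?case using e by simp
  next
    case (Suc n)
    have "a (K + Suc n) \<le> r * a (K+n) + \<epsilon> (K+n)" using rec by simp
    also have "\<dots> \<le> r * (r^n * a K + e/2) + (1-r)*e/2"
      using Suc r K[of "K+n"] by (intro add_mono mult_left_mono) auto
    also have "\<dots> = r^Suc n * a K + e/2" by (simp add: field_simps)
    finally show ?case .
  qed
  have "(\<lambda>n. r^n * a K) \<longlonglongrightarrow> 0 * a K"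
    by (intro tendsto_mult LIMSEQ_power_zero tendsto_const) (use r in auto)
  hence "(\<lambda>n. r^n * a K) \<longlonglongrightarrow> 0" by simp
  from this[THEN LIMSEQ_D, of "e/2"] e obtain N1 where N1: "\<And>n. n \<ge> N1 \<Longrightarrow> norm (r^n * a K) < e/2"
    by auto
  show "\<exists>no. \<forall>n\<ge>no. norm (a n - 0) < e"
  proof (intro exI allI impI)
    fix n assume n: "n \<ge> K + N1"
    have "a n = a (K + (n-K))" using n by simp
    also have "\<dots> \<le> r^(n-K) * a K + e/2" by (rule ind)
    also have "\<dots> < e"
    proof -
      have "N1 \<le> n - K" using n by simp
      from N1[OF this] abs_ge_self[of "r^(n-K)*a K"] show ?thesis by simp
    qed
    finally show "norm (a n - 0) < e" using nn[of n] by simp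
  qed
qed

lemma first_order:
  fixes y f :: "nat \<Rightarrow> complex"
  assumes rec: "\<And>k. y (Suc k) = l * y k + f k" and l: "cmod l < 1" and f: "f \<longlonglongrightarrow> F"
  shows "y \<longlonglongrightarrow> F / (1 - l)"
proof -
  have l1: "1 - l \<noteq> 0" using l by auto
  define g where "g = (\<lambda>k. y k - F / (1 - l))"
  have grec: "g (Suc k) = l * g k + (f k - F)" for k
    unfolding g_def rec using l1 by (simp add: field_simps)
  have "(\<lambda>k. cmod (g k)) \<longlonglongrightarrow> 0"
  proof (rule contract_to_zero)
    show "cmod (g (Suc k)) \<le> cmod l * cmod (g k) + cmod (f k - F)" for k
      unfolding grec by (metis norm_mult norm_triangle_ineq)
    show "(\<lambda>k. cmod (f k - F)) \<longlonglongrightarrow> 0"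
      using tendsto_norm[OF tendsto_diff[OF f tendsto_const[of F]]] by simp
  qed (use l in auto)
  hence "g \<longlonglongrightarrow> 0" by (simp add: tendsto_norm_zero_iff)
  hence "(\<lambda>k. g k + F / (1 - l)) \<longlonglongrightarrow> 0 + F / (1 - l)" by (intro tendsto_intros)
  thus ?thesis unfolding g_def by simp
qed

definition pop :: "complex poly \<Rightarrow> (nat \<Rightarrow> complex) \<Rightarrow> nat \<Rightarrow> complex" where
  "pop p w k = (\<Sum>j<Suc (degree p). coeff p j * w (k+j))"

lemma pop_ext: assumes "n > degree p" shows "pop p w k = (\<Sum>j<n. coeff p j * w (k+j))"
proof -
  have "(\<Sum>j<n. coeff p j * w (k+j)) = (\<Sum>j<Suc (degree p). coeff p j * w (k+j))"
    by (rule sum.mono_neutral_right) (use assms in \<open>auto simp: coeff_eq_0\<close>)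
  thus ?thesis unfolding pop_def by simp
qed

lemma pop_lin: "pop ([:- l, 1:] * q) w k = pop q w (Suc k) - l * pop q w k"
proof -
  define n where "n = Suc (Suc (degree q))"
  have d: "degree ([:- l, 1:] * q) < n" unfolding n_def
    using degree_mult_le[of "[:- l, 1:]" q] by simp
  have e: "[:- l, 1:] * q = Polynomial.smult (- l) q + pCons 0 q" by simp
  have "pop ([:- l, 1:] * q) w k = (\<Sum>j<n. coeff ([:- l, 1:] * q) j * w (k+j))"
    by (rule pop_ext[OF d])
  also have "\<dots> = (\<Sum>j<n. (- l) * (coeff q j * w (k+j))) + (\<Sum>j<n. coeff (pCons 0 q) j * w (k+j))"
    unfolding e by (simp add: sum.distrib[symmetric] algebra_simps)
  also have "(\<Sum>j<n. coeff (pCons 0 q) j * w (k+j)) = (\<Sum>j<Suc (Suc (degree q)). coeff (pCons 0 q) j * w (k+j))"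
    unfolding n_def ..
  also have "\<dots> = (\<Sum>j<Suc (degree q). coeff q j * w (Suc k+j))"
    by (subst sum.lessThan_Suc_shift) simp
  also have "\<dots> = pop q w (Suc k)" unfolding pop_def ..
  also have "(\<Sum>j<n. (- l) * (coeff q j * w (k+j))) = - l * pop q w k"
  proof -
    have "(\<Sum>j<n. (- l) * (coeff q j * w (k+j))) = (- l) * (\<Sum>j<n. coeff q j * w (k+j))"
      by (rule sum_distrib_left[symmetric])
    also have "(\<Sum>j<n. coeff q j * w (k+j)) = pop q w k" using pop_ext[of q n w k] n_def by simp
    finally show ?thesis by simp
  qed
  finally show ?thesis by simp
qed

lemma poly_rec_conv:
  fixes p :: "complex poly" and w :: "nat \<Rightarrow> complex"
  assumes "p \<noteq> 0" "\<And>s. poly p s = 0 \<Longrightarrow> cmod s < 1" "(\<lambda>k. pop p w k) \<longlonglongrightarrow> L"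
  shows "w \<longlonglongrightarrow> L / poly p 1"
  using assms
proof (induction "degree p" arbitrary: p w L)
  case 0
  then obtain c where c: "p = [:c:]" by (metis degree_eq_zeroE)
  hence c0: "c \<noteq> 0" using 0 by simp
  have "pop p w k = c * w k" for k unfolding pop_def c by simp
  hence "(\<lambda>k. c * w k) \<longlonglongrightarrow> L" using 0 by simp
  hence "(\<lambda>k. (1/c) * (c * w k)) \<longlonglongrightarrow> (1/c) * L" by (intro tendsto_intros)
  thus ?case using c0 c by (simp add: field_simps)
next
  case (Suc n)
  have "\<not> constant (poly p)" using Suc(2) by (simp add: constant_degree)
  then obtain l where l: "poly p l = 0" using fundamental_theorem_of_algebra by blast
  hence "[:- l, 1:] dvd p" by (simp add: poly_eq_0_iff_dvd)
  then obtain q where q: "p = [:- l, 1:] * q" by (elim dvdE)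
  have q0: "q \<noteq> 0" using Suc(3) q by auto
  have "degree p = degree [:- l, 1:] + degree q" unfolding q by (rule degree_mult_eq) (use q0 in auto)
  hence dq: "n = degree q" using Suc(2) by simp
  have lt: "cmod l < 1" using Suc(4) l by blast
  have rq: "poly q s = 0 \<Longrightarrow> cmod s < 1" for s using Suc(4)[of s] q by simp
  define y where "y = pop q w"
  have "y (Suc k) = l * y k + pop p w k" for k unfolding y_def q pop_lin by simp
  from first_order[OF this lt Suc(5)] have "y \<longlonglongrightarrow> L / (1 - l)" .
  hence "(\<lambda>k. pop q w k) \<longlonglongrightarrow> L / (1 - l)" unfolding y_def by simp
  from Suc(1)[OF dq q0 rq this] have wq: "w \<longlonglongrightarrow> L / (1 - l) / poly q 1" .
  have eq: "poly p 1 = (1 - l) * poly q 1" unfolding q by (simp add: algebra_simps)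
  have e2: "L / (1 - l) / poly q 1 = L / poly p 1" unfolding eq by (simp add: divide_divide_eq_left)
  show ?case using wq unfolding e2 .
qed



lemma smult_pow_mat:
  fixes A :: "'a::comm_ring_1 mat"
  assumes A: "A \<in> carrier_mat n n"
  shows "(c \<cdot>\<^sub>m A) ^\<^sub>m k = c^k \<cdot>\<^sub>m (A ^\<^sub>m k)"
proof (induction k)
  case 0 thus ?case using A by (auto intro!: eq_matI)
next
  case (Suc k)
  have Ak: "A ^\<^sub>m k \<in> carrier_mat n n" using A by simp
  have "(c \<cdot>\<^sub>m A) ^\<^sub>m Suc k = (c^k \<cdot>\<^sub>m (A ^\<^sub>m k)) * (c \<cdot>\<^sub>m A)" using Suc by simp
  also have "\<dots> = c^k \<cdot>\<^sub>m ((A ^\<^sub>m k) * (c \<cdot>\<^sub>m A))" by (rule mult_smult_assoc_mat) (use Ak A in auto)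
  also have "(A ^\<^sub>m k) * (c \<cdot>\<^sub>m A) = c \<cdot>\<^sub>m ((A ^\<^sub>m k) * A)" by (rule mult_smult_distrib) (use Ak A in auto)
  finally show ?case by (auto intro!: eq_matI simp: mult.commute)
qed

lemma mat_pow_decay:
  fixes F :: "real mat"
  assumes F: "F \<in> carrier_mat n n" and n: "n > 0"
    and ev: "\<And>e. eigenvalue (map_mat complex_of_real F) e \<Longrightarrow> cmod e < 1"
  shows "\<exists>c \<rho>. 0 < \<rho> \<and> \<rho> < 1 \<and> (\<forall>k i j. i < n \<longrightarrow> j < n \<longrightarrow> \<bar>(F ^\<^sub>m k) $$ (i,j)\<bar> \<le> c * \<rho>^k)"
proof -
  define Fc where "Fc = map_mat complex_of_real F"
  have Fc: "Fc \<in> carrier_mat n n" using F unfolding Fc_def by simp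
  define sr where "sr = spectral_radius Fc"
  have "sr \<in> norm ` spectrum Fc" unfolding sr_def by (rule spectral_radius_mem_max(1)[OF Fc n])
  then obtain e0 where e0: "eigenvalue Fc e0" "sr = cmod e0" unfolding spectrum_def by auto
  have sr1: "sr < 1" "sr \<ge> 0" using ev[of e0] e0 unfolding Fc_def by auto
  define \<rho> where "\<rho> = (sr + 1) / 2"
  have rho: "0 < \<rho>" "\<rho> < 1" "sr < \<rho>" using sr1 unfolding \<rho>_def by auto
  define G where "G = complex_of_real (1/\<rho>) \<cdot>\<^sub>m Fc"
  have G: "G \<in> carrier_mat n n" using Fc unfolding G_def by simp
  have FG: "Fc = complex_of_real \<rho> \<cdot>\<^sub>m G" unfolding G_def using Fc rho
    by (auto intro!: eq_matI)
  have evG: "cmod e < 1" if "eigenvalue G e" for e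
  proof -
    from that obtain v where v: "v \<in> carrier_vec n" "v \<noteq> 0\<^sub>v n" "G *\<^sub>v v = e \<cdot>\<^sub>v v"
      unfolding eigenvalue_def eigenvector_def using G by auto
    have "Fc *\<^sub>v v = complex_of_real \<rho> \<cdot>\<^sub>v (G *\<^sub>v v)" unfolding FG using G v(1)
      by (intro eq_vecI) (auto simp: scalar_prod_smult_left)
    also have "\<dots> = (complex_of_real \<rho> * e) \<cdot>\<^sub>v v" unfolding v(3) by (auto intro!: eq_vecI)
    finally have "eigenvalue Fc (complex_of_real \<rho> * e)"
      unfolding eigenvalue_def eigenvector_def using v Fc by auto
    hence "cmod (complex_of_real \<rho> * e) \<le> sr"
      unfolding sr_def by (intro spectral_radius_mem_max(2)[OF Fc n]) (auto simp: spectrum_def)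
    hence "\<rho> * cmod e \<le> sr" using rho by (simp add: norm_mult)
    hence "\<rho> * cmod e < \<rho> * 1" using rho by linarith
    thus ?thesis using rho mult_less_cancel_left_pos by blast
  qed
  have "spectral_radius G \<in> norm ` spectrum G" by (rule spectral_radius_mem_max(1)[OF G n])
  hence srG: "spectral_radius G < 1" using evG unfolding spectrum_def by auto
  from spectral_radius_jnf_norm_bound_less_1_upper_triangular[OF G srG]
  obtain c where c: "\<And>k. norm_bound (G ^\<^sub>m k) c" by blast
  have "\<bar>(F ^\<^sub>m k) $$ (i,j)\<bar> \<le> c * \<rho>^k" if ij: "i < n" "j < n" for k i j
  proof -
    have "map_mat complex_of_real (F ^\<^sub>m k) = Fc ^\<^sub>m k" unfolding Fc_def
      by (rule of_real_hom.mat_hom_pow[OF F])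
    hence "complex_of_real ((F ^\<^sub>m k) $$ (i,j)) = (Fc ^\<^sub>m k) $$ (i,j)"
      using ij F by (metis index_map_mat(1) pow_mat_dim_square)
    also have "Fc ^\<^sub>m k = complex_of_real \<rho> ^ k \<cdot>\<^sub>m (G ^\<^sub>m k)" unfolding FG by (rule smult_pow_mat[OF G])
    finally have "\<bar>(F ^\<^sub>m k) $$ (i,j)\<bar> = cmod (complex_of_real \<rho> ^ k * (G ^\<^sub>m k) $$ (i,j))"
      using ij G by (metis index_smult_mat(1) pow_mat_dim_square norm_of_real carrier_matD)
    also have "\<dots> = \<rho>^k * cmod ((G ^\<^sub>m k) $$ (i,j))" using rho by (simp add: norm_mult norm_power)
    also have "\<dots> \<le> \<rho>^k * c" using c[of k] ij G unfolding norm_bound_def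
      using rho by (intro mult_left_mono) auto
    finally show ?thesis by (simp add: mult.commute)
  qed
  thus ?thesis using rho by blast
qed



lemma conv_step:
  fixes a V :: "nat \<Rightarrow> real"
  assumes J: "finite J" "i \<notin> J" and a: "\<forall>j\<in>J. a j \<ge> 0"
    and VM: "\<forall>j\<in>insert i J. V j \<le> M" and eta: "\<eta> \<le> D"
    and b1: "\<beta> \<le> 1/(1 + sum a J)" and b2: "\<forall>j\<in>J. \<beta> \<le> a j/(1 + sum a J)"
    and b0: "0 \<le> \<beta>" and j0: "j0 \<in> insert i J"
  shows "V i - (1/(1 + sum a J)) * (\<Sum>j\<in>J. a j * (V i - V j)) + \<eta> \<le> \<beta> * V j0 + (1-\<beta>)*M + D"
proof -
  define s where "s = sum a J"
  have s0: "s \<ge> 0" unfolding s_def using a by (simp add: sum_nonneg)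
  define c where "c = 1/(1+s)"
  have c0: "c > 0" unfolding c_def using s0 by simp
  have cs: "c * (1 + s) = 1" unfolding c_def using s0 by simp
  define P where "P = (\<Sum>j\<in>J. a j * V j)"
  have S1: "(\<Sum>j\<in>J. a j * (V i - V j)) = s * V i - P"
    unfolding s_def P_def by (simp add: right_diff_distrib sum_subtractf sum_distrib_left[symmetric] sum_distrib_right mult.commute)
  have S2: "(\<Sum>j\<in>J. c * a j * (V j - M)) = c * P - c * s * M"
    unfolding s_def P_def by (simp add: right_diff_distrib sum_subtractf sum_distrib_left sum_distrib_right mult.assoc)
  have cs': "c * s = 1 - c" using cs by (simp add: algebra_simps)
  have e1: "c * (s * V i - P) = (1 - c) * V i - c * P"
    by (simp add: right_diff_distrib mult.assoc[symmetric] cs')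
  have e3: "c * s * M = (1 - c) * M" by (simp add: cs')
  have key: "V i - c * (\<Sum>j\<in>J. a j * (V i - V j)) - M = c*(V i - M) + (\<Sum>j\<in>J. c * a j * (V j - M))"
    unfolding S1 S2 e1 e3 by (simp add: algebra_simps)
  have t_nonpos: "\<forall>j\<in>J. c * a j * (V j - M) \<le> 0"
    using a VM c0 by (auto intro!: mult_nonneg_nonpos)
  have Vi: "V i - M \<le> 0" using VM by simp
  have bound: "c*(V i - M) + (\<Sum>j\<in>J. c * a j * (V j - M)) \<le> \<beta> * (V j0 - M)"
  proof (cases "j0 = i")
    case True
    have "(\<Sum>j\<in>J. c * a j * (V j - M)) \<le> 0" using t_nonpos by (simp add: sum_nonpos)
    moreover have "c * (V i - M) \<le> \<beta> * (V i - M)"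
    proof -
      have "\<beta> \<le> c" using b1 unfolding c_def s_def .
      from mult_right_mono_neg[OF this Vi] show ?thesis .
    qed
    ultimately show ?thesis using True by simp
  next
    case False
    hence j0J: "j0 \<in> J" using j0 by simp
    have "(\<Sum>j\<in>J. c * a j * (V j - M)) = c * a j0 * (V j0 - M) + (\<Sum>j\<in>J - {j0}. c * a j * (V j - M))"
      using J j0J by (simp add: sum.remove)
    also have "(\<Sum>j\<in>J - {j0}. c * a j * (V j - M)) \<le> 0" using t_nonpos by (intro sum_nonpos) auto
    also have "c * a j0 * (V j0 - M) \<le> \<beta> * (V j0 - M)"
    proof -
      have "\<beta> \<le> c * a j0" using b2 j0J unfolding c_def s_def by simp
      moreover have "V j0 - M \<le> 0" using VM j0J by simp
      ultimately show ?thesis using mult_right_mono_neg by blast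
    qed
    finally have "(\<Sum>j\<in>J. c * a j * (V j - M)) \<le> \<beta> * (V j0 - M)" by simp
    moreover have "c * (V i - M) \<le> 0" using c0 Vi by (simp add: mult_nonneg_nonpos)
    ultimately show ?thesis by simp
  qed
  from key bound eta show ?thesis unfolding c_def s_def by (simp add: algebra_simps)
qed

lemma eta_bound:
  fixes a p :: "nat \<Rightarrow> real"
  assumes J: "finite J" and a: "\<forall>j\<in>J. a j \<ge> 0" and B: "\<forall>j\<in>J. \<bar>p j\<bar> \<le> B" "\<bar>q\<bar> \<le> B"
  shows "\<bar>(1/(1 + sum a J)) * (\<Sum>j\<in>J. a j * (q - p j))\<bar> \<le> 2 * B"
proof -
  define s where "s = sum a J"
  have s0: "s \<ge> 0" unfolding s_def using a by (simp add: sum_nonneg)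
  have "\<bar>\<Sum>j\<in>J. a j * (q - p j)\<bar> \<le> (\<Sum>j\<in>J. \<bar>a j * (q - p j)\<bar>)" by (rule sum_abs)
  also have "\<dots> \<le> (\<Sum>j\<in>J. a j * (2*B))"
  proof (rule sum_mono)
    fix j assume j: "j \<in> J"
    have "\<bar>q - p j\<bar> \<le> 2*B" using B j by (auto simp: abs_le_iff)
    thus "\<bar>a j * (q - p j)\<bar> \<le> a j * (2*B)" using a j by (simp add: abs_mult mult_left_mono)
  qed
  also have "\<dots> = s * (2*B)" unfolding s_def by (simp add: sum_distrib_right)
  finally have 1: "\<bar>\<Sum>j\<in>J. a j * (q - p j)\<bar> \<le> s * (2*B)" .
  have B0: "B \<ge> 0" using B by simp
  have "\<bar>(1/(1 + s)) * (\<Sum>j\<in>J. a j * (q - p j))\<bar> = (1/(1+s)) * \<bar>\<Sum>j\<in>J. a j * (q - p j)\<bar>"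
    using s0 by (simp add: abs_mult)
  also have "\<dots> \<le> (1/(1+s)) * (s * (2*B))" using 1 s0 by (intro mult_left_mono) auto
  also have "\<dots> \<le> 2*B" using s0 B0 by (simp add: field_simps)
  finally show ?thesis unfolding s_def .
qed

lemma intA_mult:
  assumes x: "x \<in> carrier_vec m" and l: "l < m"
  shows "(int_A m *\<^sub>v x) $ l = (if Suc l < m then x $ Suc l else 0)"
proof -
  have "(int_A m *\<^sub>v x) $ l = (\<Sum>j<m. (if j = Suc l then 1 else 0) * x $ j)"
    using x l unfolding int_A_def by (simp add: mult_mat_vec_def scalar_prod_def lessThan_atLeast0)
  also have "\<dots> = (\<Sum>j<m. (if j = Suc l then x $ j else 0))" by (rule sum.cong) auto
  also have "\<dots> = (if Suc l < m then x $ Suc l else 0)" by (simp add: sum.delta')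
  finally show ?thesis .
qed

lemma intB_idx: "l < m \<Longrightarrow> int_B m $ l = (if l = m - 1 then 1 else 0)"
  unfolding int_B_def by simp

lemma K5_expand:
  assumes x: "x \<in> carrier_vec (Suc n)"
  shows "gainK5 (Suc n) b \<bullet> x = (\<Sum>l<n. b (l+1) * x $ l) + x $ n"
  using x unfolding gainK5_def scalar_prod_def
  by (simp add: lessThan_atLeast0[symmetric] sum.lessThan_Suc)

lemma K4_K5:
  assumes x: "x \<in> carrier_vec (Suc n)" and n: "n \<ge> 1"
  shows "gainK4 (Suc n) b \<bullet> x + (\<Sum>l<n. b (l+1) * x $ Suc l) = gainK5 (Suc n) b \<bullet> x"
proof -
  define f where "f = (\<lambda>l. if l = 0 then 0 else b l * x $ l)"
  have s1: "(\<Sum>l<n. b (l+1) * x $ Suc l) = (\<Sum>l<n. f l) + f n"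
  proof -
    have "(\<Sum>l<Suc n. f l) = f 0 + (\<Sum>l<n. f (Suc l))" by (rule sum.lessThan_Suc_shift)
    also have "\<dots> = (\<Sum>l<n. b (l+1) * x $ Suc l)" unfolding f_def by simp
    finally show ?thesis by simp
  qed
  have K4: "gainK4 (Suc n) b \<bullet> x = (\<Sum>l<n. (b (l+1) - (if l = 0 then 0 else b l)) * x $ l) + (1 - b n) * x $ n"
    using x n unfolding gainK4_def scalar_prod_def
    by (auto simp: lessThan_atLeast0[symmetric] sum.lessThan_Suc intro!: sum.cong)
  have "(\<Sum>l<n. (b (l+1) - (if l = 0 then 0 else b l)) * x $ l) = (\<Sum>l<n. b (l+1) * x $ l) - (\<Sum>l<n. f l)"
    unfolding f_def by (simp add: sum_subtractf[symmetric] algebra_simps) (rule sum.cong, auto)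
  moreover have "f n = b n * x $ n" unfolding f_def using n by simp
  ultimately show ?thesis using K4 s1 K5_expand[OF x] by (simp add: algebra_simps)
qed

lemma coeff_char_b:
  "coeff (char_b (Suc n) b) j = (if j = n then 1 else if j < n then complex_of_real (b (j+1)) else 0)"
  unfolding char_b_def by (auto simp: coeff_sum coeff_monom)


lemma dot_bound:
  fixes K v :: "real vec"
  assumes K: "K \<in> carrier_vec m" and v: "v \<in> carrier_vec m" and b: "\<And>l. l < m \<Longrightarrow> \<bar>v $ l\<bar> \<le> g"
  shows "\<bar>K \<bullet> v\<bar> \<le> (\<Sum>l<m. \<bar>K $ l\<bar>) * g"
proof -
  have "K \<bullet> v = (\<Sum>l<m. K $ l * v $ l)" using K v unfolding scalar_prod_def by (simp add: lessThan_atLeast0)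
  hence "\<bar>K \<bullet> v\<bar> \<le> (\<Sum>l<m. \<bar>K $ l * v $ l\<bar>)" by (simp add: sum_abs)
  also have "\<dots> \<le> (\<Sum>l<m. \<bar>K $ l\<bar> * g)"
    by (rule sum_mono) (use b in \<open>auto simp: abs_mult intro: mult_left_mono\<close>)
  also have "\<dots> = (\<Sum>l<m. \<bar>K $ l\<bar>) * g" by (simp add: sum_distrib_right)
  finally show ?thesis .
qed



theorem theorem3:
  fixes N m :: nat
    and S :: "'q set" and \<alpha> :: "'q \<Rightarrow> nat \<Rightarrow> nat \<Rightarrow> real" and \<sigma> :: "nat \<Rightarrow> 'q"
    and b :: "nat \<Rightarrow> real" and C K6 :: "real mat"
    and x z :: "nat \<Rightarrow> nat \<Rightarrow> real vec" and u :: "nat \<Rightarrow> nat \<Rightarrow> real"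
  assumes "N \<ge> 1" and "m \<ge> 2"
    and "finite S" and "\<And>k. \<sigma> k \<in> S"
    and "\<And>q i j. q \<in> S \<Longrightarrow> \<alpha> q i j \<ge> 0"
    and "\<And>q i. q \<in> S \<Longrightarrow> \<alpha> q i i = 0"
    and "\<And>q i j. q \<in> S \<Longrightarrow> (i \<ge> N \<or> j \<ge> N) \<Longrightarrow> \<alpha> q i j = 0"
    and "C \<in> carrier_mat 1 m" and "K6 \<in> carrier_mat m 1"
    and "UJQSC N \<alpha> \<sigma>"
    and "\<And>ev. eigenvalue (map_mat complex_of_real (int_A m + K6 * C)) ev \<Longrightarrow> cmod ev < 1"
    and "\<And>s. poly (char_b m b) s = 0 \<Longrightarrow> cmod s < 1"
    and "\<And>i. i < N \<Longrightarrow> x i 0 \<in> carrier_vec m"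
    and "\<And>i. i < N \<Longrightarrow> z i 0 \<in> carrier_vec m"
    and "\<And>i k. i < N \<Longrightarrow> x i (Suc k) = int_A m *\<^sub>v x i k + u i k \<cdot>\<^sub>v int_B m"
    and "\<And>i k. i < N \<Longrightarrow> u i k =
          gainK4 m b \<bullet> z i k
          - (1 / (1 + (\<Sum>j\<in>nbrs N \<alpha> (\<sigma> k) i. \<alpha> (\<sigma> k) i j)))
            * (\<Sum>j\<in>nbrs N \<alpha> (\<sigma> k) i. \<alpha> (\<sigma> k) i j * (gainK5 m b \<bullet> (z i k - z j k)))"
    and "\<And>i k. i < N \<Longrightarrow> z i (Suc k) =
          (int_A m + K6 * C) *\<^sub>v z i k + u i k \<cdot>\<^sub>v int_B m - K6 *\<^sub>v (C *\<^sub>v x i k)"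
  shows "\<exists>xs :: real vec. xs \<in> carrier_vec m \<and>
           (\<forall>i<N. \<forall>l<m. (\<lambda>k. x i k $ l) \<longlonglongrightarrow> xs $ l)"
proof -
  obtain n where m: "m = Suc n" and n1: "n \<ge> 1" using assms(2) by (intro that[of "m - 1"]) auto
  define F where "F = int_A m + K6 * C"
  have Ac: "int_A m \<in> carrier_mat m m" unfolding int_A_def by simp
  have Fc: "F \<in> carrier_mat m m" using Ac assms(8,9) unfolding F_def by auto
  have Bc: "int_B m \<in> carrier_vec m" unfolding int_B_def by simp
  have K4c: "gainK4 m b \<in> carrier_vec m" unfolding gainK4_def by simp
  have K5c: "gainK5 m b \<in> carrier_vec m" unfolding gainK5_def by simp
  have xrec: "\<And>i k. i < N \<Longrightarrow> x i (Suc k) = int_A m *\<^sub>v x i k + u i k \<cdot>\<^sub>v int_B m" using assms(15) by blast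
  have zrec: "\<And>i k. i < N \<Longrightarrow> z i (Suc k) = F *\<^sub>v z i k + u i k \<cdot>\<^sub>v int_B m - K6 *\<^sub>v (C *\<^sub>v x i k)"
    using assms(17) unfolding F_def by blast
  have carr: "x i k \<in> carrier_vec m \<and> z i k \<in> carrier_vec m" if i: "i < N" for i k
  proof (induction k)
    case 0 thus ?case using assms(13,14) i by blast
  next
    case (Suc k)
    hence xc: "x i k \<in> carrier_vec m" and zc: "z i k \<in> carrier_vec m" by auto
    have "x i (Suc k) \<in> carrier_vec m" unfolding xrec[OF i] using Ac Bc xc by auto
    moreover have "C *\<^sub>v x i k \<in> carrier_vec 1" using assms(8) xc by auto
    hence "z i (Suc k) \<in> carrier_vec m" unfolding zrec[OF i] using Fc Bc zc assms(9) by auto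
    ultimately show ?case by blast
  qed
  have xS: "x i (Suc k) $ l = (if l = n then u i k else x i k $ Suc l)" if i: "i < N" and l: "l < m" for i k l
  proof -
    have xc: "x i k \<in> carrier_vec m" using carr[OF i] by blast
    have "x i (Suc k) $ l = (int_A m *\<^sub>v x i k) $ l + u i k * int_B m $ l"
      unfolding xrec[OF i] using l Ac Bc xc by simp
    also have "\<dots> = (if l = n then u i k else x i k $ Suc l)"
      unfolding intA_mult[OF xc l] intB_idx[OF l] using m l by auto
    finally show ?thesis .
  qed
  define w where "w = (\<lambda>i k. x i k $ 0)"
  have xw: "x i k $ l = w i (k + l)" if i: "i < N" and l: "l < m" for i k l
    using l
  proof (induction l arbitrary: k)
    case 0 thus ?case unfolding w_def by simp
  next
    case (Suc l)
    have "x i k $ Suc l = x i (Suc k) $ l" using xS[OF i, of l k] Suc.prems m by simp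
    also have "\<dots> = w i (Suc k + l)" using Suc by simp
    finally show ?case by simp
  qed
  define e where "e = (\<lambda>i k. z i k - x i k)"
  have ec: "e i k \<in> carrier_vec m" if "i < N" for i k using carr[OF that] unfolding e_def by auto
  have eS: "e i (Suc k) = F *\<^sub>v e i k" if i: "i < N" for i k
  proof -
    have xc: "x i k \<in> carrier_vec m" and zc: "z i k \<in> carrier_vec m" using carr[OF i] by auto
    have Cx: "C *\<^sub>v x i k \<in> carrier_vec 1" using assms(8) xc by auto
    have Fx: "F *\<^sub>v x i k = int_A m *\<^sub>v x i k + K6 *\<^sub>v (C *\<^sub>v x i k)"
      unfolding F_def using Ac assms(8,9) xc
      by (simp add: add_mult_distrib_mat_vec assoc_mult_mat_vec)
    have "F *\<^sub>v e i k = F *\<^sub>v z i k - F *\<^sub>v x i k" unfolding e_def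
      using Fc xc zc by (simp add: mult_minus_distrib_mat_vec)
    also have "\<dots> = e i (Suc k)" unfolding e_def xrec[OF i] zrec[OF i] Fx
      using Fc Ac Bc xc zc Cx assms(9) by (intro eq_vecI) auto
    finally show ?thesis by simp
  qed
  have eF: "e i k = (F ^\<^sub>m k) *\<^sub>v e i 0" if i: "i < N" for i k
  proof -
    have "e i (j + k) = (F ^\<^sub>m k) *\<^sub>v e i j" for j
    proof (induction k arbitrary: j)
      case 0 thus ?case using ec[OF i] Fc by simp
    next
      case (Suc k)
      have "e i (j + Suc k) = e i (Suc j + k)" by simp
      also have "\<dots> = (F ^\<^sub>m k) *\<^sub>v e i (Suc j)" by (rule Suc)
      also have "\<dots> = (F ^\<^sub>m k) *\<^sub>v (F *\<^sub>v e i j)" unfolding eS[OF i] ..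
      also have "\<dots> = (F ^\<^sub>m k * F) *\<^sub>v e i j"
        by (rule assoc_mult_mat_vec[symmetric]) (use Fc ec[OF i] in auto)
      finally show ?case by simp
    qed
    from this[of 0] show ?thesis by simp
  qed
  have evF: "\<And>ev. eigenvalue (map_mat complex_of_real F) ev \<Longrightarrow> cmod ev < 1"
    using assms(11) unfolding F_def by blast
  from mat_pow_decay[OF Fc _ evF] m obtain cc \<rho> where rho: "0 < \<rho>" "\<rho> < 1"
    and dec: "\<And>k i j. i < m \<Longrightarrow> j < m \<Longrightarrow> \<bar>(F ^\<^sub>m k) $$ (i,j)\<bar> \<le> cc * \<rho>^k" by blast
  have cc0: "cc * \<rho>^k \<ge> 0" for k 
  proof -
    have "\<bar>(F ^\<^sub>m k) $$ (0,0)\<bar> \<le> cc * \<rho>^k" using dec[of 0 0 k] m by simp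
    thus ?thesis using abs_ge_zero order_trans by blast
  qed
  define Ce where "Ce = (\<Sum>i<N. \<Sum>j<m. \<bar>e i 0 $ j\<bar>)"
  have Ce0: "Ce \<ge> 0" unfolding Ce_def by (intro sum_nonneg) auto
  define G where "G = (\<lambda>k. cc * \<rho>^k * Ce)"
  have G0: "G k \<ge> 0" for k unfolding G_def using cc0 Ce0 by simp
  have ebound: "\<bar>e i k $ l\<bar> \<le> G k" if i: "i < N" and l: "l < m" for i k l
  proof -
    have "e i k $ l = (\<Sum>j<m. (F ^\<^sub>m k) $$ (l,j) * e i 0 $ j)"
    proof -
      have "e i k $ l = ((F ^\<^sub>m k) *\<^sub>v e i 0) $ l" using eF[OF i, of k] by simp
      also have "\<dots> = (\<Sum>j<m. (F ^\<^sub>m k) $$ (l,j) * e i 0 $ j)"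
      proof -
        have d: "dim_vec (e i 0) = m" using ec[OF i] by simp
        show ?thesis using l Fc d by (auto simp: scalar_prod_def lessThan_atLeast0 intro!: sum.cong)
      qed
      finally show ?thesis .
    qed
    hence "\<bar>e i k $ l\<bar> \<le> (\<Sum>j<m. \<bar>(F ^\<^sub>m k) $$ (l,j) * e i 0 $ j\<bar>)" by (simp add: sum_abs)
    also have "\<dots> \<le> (\<Sum>j<m. cc * \<rho>^k * \<bar>e i 0 $ j\<bar>)"
      by (rule sum_mono) (use dec l in \<open>auto simp: abs_mult intro: mult_right_mono\<close>)
    also have "\<dots> = cc * \<rho>^k * (\<Sum>j<m. \<bar>e i 0 $ j\<bar>)" by (simp add: sum_distrib_left)
    also have "(\<Sum>j<m. \<bar>e i 0 $ j\<bar>) \<le> Ce" unfolding Ce_def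
      by (rule member_le_sum[where f="\<lambda>i. \<Sum>j<m. \<bar>e i 0 $ j\<bar>"]) (use i in \<open>auto intro: sum_nonneg\<close>)
    finally show ?thesis unfolding G_def using cc0 by (simp add: mult_left_mono)
  qed

  define K4n where "K4n = (\<Sum>l<m. \<bar>gainK4 m b $ l\<bar>)"
  define K5n where "K5n = (\<Sum>l<m. \<bar>gainK5 m b $ l\<bar>)"
  have K4n0: "K4n \<ge> 0" "K5n \<ge> 0" unfolding K4n_def K5n_def by (auto intro: sum_nonneg)
  define V where "V = (\<lambda>i k. gainK5 m b \<bullet> x i k)"
  define a4 where "a4 = (\<lambda>i k. gainK4 m b \<bullet> e i k)"
  define a5 where "a5 = (\<lambda>i k. gainK5 m b \<bullet> e i k)"
  have a4b: "\<bar>a4 i k\<bar> \<le> K4n * G k" if "i < N" for i k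
    unfolding a4_def K4n_def by (rule dot_bound[OF K4c ec[OF that]]) (use ebound that in auto)
  have a5b: "\<bar>a5 i k\<bar> \<le> K5n * G k" if "i < N" for i k
    unfolding a5_def K5n_def by (rule dot_bound[OF K5c ec[OF that]]) (use ebound that in auto)
  have K4z: "gainK4 m b \<bullet> z i k = gainK4 m b \<bullet> x i k + a4 i k" if "i < N" for i k
    unfolding a4_def e_def using carr[OF that] K4c by (simp add: scalar_prod_minus_distrib)
  have K5z: "gainK5 m b \<bullet> z i k = V i k + a5 i k" if "i < N" for i k
    unfolding a5_def V_def e_def using carr[OF that] K5c by (simp add: scalar_prod_minus_distrib)
  define J where "J = (\<lambda>k i. nbrs N \<alpha> (\<sigma> k) i)"
  define a where "a = (\<lambda>k i j. \<alpha> (\<sigma> k) i j)"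
  have Jsub: "J k i \<subseteq> {..<N}" for k i unfolding J_def nbrs_def by auto
  have Jfin: "finite (J k i)" for k i using Jsub finite_subset by blast
  have Vrec: "V i (Suc k) = V i k - (1/(1 + sum (a k i) (J k i))) * (\<Sum>j\<in>J k i. a k i j * (V i k - V j k))
       + (a4 i k - (1/(1 + sum (a k i) (J k i))) * (\<Sum>j\<in>J k i. a k i j * (a5 i k - a5 j k)))"
    if i: "i < N" for i k
  proof -
    have xc: "x i k \<in> carrier_vec m" using carr[OF i] by blast
    have xc': "x i (Suc k) \<in> carrier_vec (Suc n)" using carr[OF i] m by blast
    have "V i (Suc k) = (\<Sum>l<n. b (l+1) * x i (Suc k) $ l) + x i (Suc k) $ n"
      unfolding V_def m by (rule K5_expand[OF xc'])
    also have "\<dots> = (\<Sum>l<n. b (l+1) * x i k $ Suc l) + u i k"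
      using xS[OF i] m by simp
    also have "u i k = gainK4 m b \<bullet> x i k + a4 i k
        - (1/(1 + sum (a k i) (J k i))) * (\<Sum>j\<in>J k i. a k i j * ((V i k + a5 i k) - (V j k + a5 j k)))"
    proof -
      have "(\<Sum>j\<in>J k i. a k i j * (gainK5 m b \<bullet> (z i k - z j k)))
          = (\<Sum>j\<in>J k i. a k i j * ((V i k + a5 i k) - (V j k + a5 j k)))"
      proof (rule sum.cong[OF refl])
        fix j assume j: "j \<in> J k i"
        hence jN: "j < N" using Jsub by blast
        have "gainK5 m b \<bullet> (z i k - z j k) = gainK5 m b \<bullet> z i k - gainK5 m b \<bullet> z j k"
          using carr[OF i] carr[OF jN] K5c by (simp add: scalar_prod_minus_distrib)
        thus "a k i j * (gainK5 m b \<bullet> (z i k - z j k)) = a k i j * ((V i k + a5 i k) - (V j k + a5 j k))"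
          using K5z[OF i] K5z[OF jN] by simp
      qed
      thus ?thesis using assms(16)[OF i, of k] K4z[OF i] unfolding J_def a_def by simp
    qed
    finally have "V i (Suc k) = (gainK4 m b \<bullet> x i k + (\<Sum>l<n. b (l+1) * x i k $ Suc l)) + a4 i k
        - (1/(1 + sum (a k i) (J k i))) * (\<Sum>j\<in>J k i. a k i j * ((V i k + a5 i k) - (V j k + a5 j k)))"
      by simp
    also have "gainK4 m b \<bullet> x i k + (\<Sum>l<n. b (l+1) * x i k $ Suc l) = V i k"
      unfolding V_def m by (rule K4_K5[OF _ n1]) (use xc m in simp)
    also have "(\<Sum>j\<in>J k i. a k i j * ((V i k + a5 i k) - (V j k + a5 j k)))
        = (\<Sum>j\<in>J k i. a k i j * (V i k - V j k)) + (\<Sum>j\<in>J k i. a k i j * (a5 i k - a5 j k))"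
      by (simp add: sum.distrib[symmetric] algebra_simps)
    finally show ?thesis by (simp add: algebra_simps)
  qed

  define Aset where "Aset = (\<lambda>(q,i,j). \<alpha> q i j) ` (S \<times> {..<N} \<times> {..<N})"
  have Afin: "finite Aset" unfolding Aset_def using assms(3) by simp
  define amax where "amax = Max (insert 0 Aset)"
  define amin where "amin = Min (insert 1 {v\<in>Aset. v > 0})"
  have amax0: "amax \<ge> 0" unfolding amax_def using Afin by simp
  have amin0: "amin > 0" unfolding amin_def using Afin by (subst Min_gr_iff) auto
  have amaxb: "a k i j \<le> amax" if "i < N" "j < N" for k i j
  proof -
    have "a k i j \<in> Aset" unfolding a_def Aset_def using that assms(4)[of k] by force
    thus ?thesis unfolding amax_def using Afin by simp
  qed
  have aminb: "amin \<le> a k i j" if "j \<in> J k i" for k i j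
  proof -
    have jN: "j < N" and pos: "a k i j > 0" using that unfolding J_def nbrs_def a_def by auto
    have iN: "i < N"
    proof (rule ccontr)
      assume "\<not> i < N"
      hence "\<alpha> (\<sigma> k) i j = 0" using assms(7)[OF assms(4)[of k]] by simp
      thus False using pos unfolding a_def by simp
    qed
    have "a k i j \<in> {v\<in>Aset. v > 0}" unfolding a_def Aset_def using iN jN pos assms(4)[of k]
      unfolding a_def by force
    thus ?thesis unfolding amin_def using Afin by simp
  qed
  have a_nn: "\<forall>j\<in>J k i. a k i j \<ge> 0" for k i unfolding a_def using assms(5)[OF assms(4)] by simp
  have iJ: "i \<notin> J k i" for k i unfolding J_def nbrs_def using assms(6)[OF assms(4)] by simp
  define \<beta> where "\<beta> = min 1 amin / (1 + N * amax)"
  have den: "1 + real N * amax > 0" using amax0 by (simp add: add_pos_nonneg)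
  have bpos: "\<beta> > 0" unfolding \<beta>_def using amin0 den by (intro divide_pos_pos) auto
  have ble1: "\<beta> \<le> 1"
  proof -
    have "min 1 amin \<le> 1 + real N * amax" using amax0 by (simp add: min_le_iff_disj)
    thus ?thesis unfolding \<beta>_def using den by simp
  qed
  have sumJ: "sum (a k i) (J k i) \<le> N * amax" if "i < N" for k i
  proof -
    have "sum (a k i) (J k i) \<le> of_nat (card (J k i)) * amax"
      by (rule sum_bounded_above) (use amaxb that Jsub in blast)
    also have "card (J k i) \<le> N" using card_mono[OF _ Jsub[of k i]] by simp
    hence "of_nat (card (J k i)) * amax \<le> N * amax" using amax0 by (simp add: mult_right_mono)
    finally show ?thesis .
  qed
  have sJ0: "sum (a k i) (J k i) \<ge> 0" for k i using a_nn by (simp add: sum_nonneg)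
  have b1: "\<beta> \<le> 1/(1 + sum (a k i) (J k i))" if "i < N" for k i
  proof -
    have "\<beta> \<le> 1 / (1 + N * amax)" unfolding \<beta>_def using amax0
      by (intro divide_right_mono) auto
    also have "\<dots> \<le> 1/(1 + sum (a k i) (J k i))" using sumJ[OF that, of k] sJ0[of k i] den
      by (intro divide_left_mono) (auto intro: mult_pos_pos)
    finally show ?thesis .
  qed
  have b2: "\<forall>j\<in>J k i. \<beta> \<le> a k i j/(1 + sum (a k i) (J k i))" if "i < N" for k i
  proof
    fix j assume j: "j \<in> J k i"
    have "\<beta> \<le> amin / (1 + N * amax)" unfolding \<beta>_def using amax0
      by (intro divide_right_mono) auto
    also have "\<dots> \<le> a k i j / (1 + sum (a k i) (J k i))" using sumJ[OF that, of k] sJ0[of k i] aminb[OF j] amin0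
      by (intro frac_le) auto
    finally show "\<beta> \<le> a k i j/(1 + sum (a k i) (J k i))" .
  qed
  define Dd where "Dd = (\<lambda>k. (K4n + 2 * K5n) * G k)"
  have Dd0: "Dd k \<ge> 0" for k unfolding Dd_def using K4n0 G0 by simp
  have Dsum: "summable Dd"
  proof -
    have "summable (\<lambda>k. \<rho>^k)" using rho by (simp add: summable_geometric)
    hence "summable (\<lambda>k. ((K4n + 2 * K5n) * cc * Ce) * \<rho>^k)" by (rule summable_mult)
    thus ?thesis unfolding Dd_def G_def by (simp add: mult_ac)
  qed
  define \<eta> where "\<eta> = (\<lambda>i k. a4 i k - (1/(1 + sum (a k i) (J k i))) * (\<Sum>j\<in>J k i. a k i j * (a5 i k - a5 j k)))"
  have etab: "\<bar>\<eta> i k\<bar> \<le> Dd k" if i: "i < N" for i k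
  proof -
    have "\<bar>(1/(1 + sum (a k i) (J k i))) * (\<Sum>j\<in>J k i. a k i j * (a5 i k - a5 j k))\<bar> \<le> 2 * (K5n * G k)"
      by (rule eta_bound[OF Jfin a_nn]) (use a5b i Jsub in blast)+
    moreover have "\<bar>\<eta> i k\<bar> \<le> \<bar>a4 i k\<bar> + \<bar>(1/(1 + sum (a k i) (J k i))) * (\<Sum>j\<in>J k i. a k i j * (a5 i k - a5 j k))\<bar>"
      unfolding \<eta>_def by (rule abs_triangle_ineq4)
    ultimately show ?thesis unfolding Dd_def using a4b[OF i, of k] by (simp add: algebra_simps)
  qed
  define Mx where "Mx = (\<lambda>k. Max ((\<lambda>i. V i k) ` {..<N}))"
  define Mn where "Mn = (\<lambda>k. Min ((\<lambda>i. V i k) ` {..<N}))"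
  have Mx_ge: "\<And>i k. i < N \<Longrightarrow> V i k \<le> Mx k" unfolding Mx_def by (intro Max_ge) auto
  have Mn_le: "\<And>i k. i < N \<Longrightarrow> Mn k \<le> V i k" unfolding Mn_def by (intro Min_le) auto
  define Ed where "Ed = (\<lambda>k j i. \<alpha> (\<sigma> k) i j > 0)"
  have j0J: "j \<in> insert i (J k i)" if "j < N" "j = i \<or> Ed k j i" for i j k
    using that unfolding Ed_def J_def nbrs_def by auto
  have up: "V i (Suc k) \<le> \<beta> * V j k + (1-\<beta>) * Mx k + Dd k" if "i<N" "j<N" "j = i \<or> Ed k j i" for k i j
  proof -
    have "V i k - (1/(1 + sum (a k i) (J k i))) * (\<Sum>j\<in>J k i. a k i j * (V i k - V j k)) + \<eta> i k
        \<le> \<beta> * V j k + (1-\<beta>) * Mx k + Dd k"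
    proof (rule conv_step[OF Jfin iJ a_nn _ _ b1[OF that(1)] b2[OF that(1)] _ j0J[OF that(2,3)]])
      show "\<forall>j\<in>insert i (J k i). V j k \<le> Mx k" using that(1) Mx_ge Jsub by blast
      show "\<eta> i k \<le> Dd k" using etab[OF that(1), of k] by simp
      show "0 \<le> \<beta>" using bpos by simp
    qed
    thus ?thesis using Vrec[OF that(1), of k] unfolding \<eta>_def by simp
  qed
  have lo: "V i (Suc k) \<ge> \<beta> * V j k + (1-\<beta>) * Mn k - Dd k" if "i<N" "j<N" "j = i \<or> Ed k j i" for k i j
  proof -
    have "(\<lambda>j. - V j k) i - (1/(1 + sum (a k i) (J k i))) * (\<Sum>j\<in>J k i. a k i j * ((\<lambda>j. - V j k) i - (\<lambda>j. - V j k) j)) + (- \<eta> i k)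
        \<le> \<beta> * (\<lambda>j. - V j k) j + (1-\<beta>) * (- Mn k) + Dd k"
    proof (rule conv_step[OF Jfin iJ a_nn _ _ b1[OF that(1)] b2[OF that(1)] _ j0J[OF that(2,3)]])
      show "\<forall>j\<in>insert i (J k i). (\<lambda>j. - V j k) j \<le> - Mn k" using that(1) Mn_le Jsub by force
      show "- \<eta> i k \<le> Dd k" using etab[OF that(1), of k] by simp
      show "0 \<le> \<beta>" using bpos by simp
    qed
    moreover have "(\<Sum>j\<in>J k i. a k i j * ((\<lambda>j. - V j k) i - (\<lambda>j. - V j k) j))
        = - (\<Sum>j\<in>J k i. a k i j * (V i k - V j k))"
      by (simp add: sum_negf[symmetric] algebra_simps)
    ultimately show ?thesis using Vrec[OF that(1), of k] unfolding \<eta>_def by (simp add: algebra_simps)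
  qed
  from assms(10) obtain MM where MM: "MM > 0" "\<And>k. quasi_strongly_connected N (union_edges N \<alpha> \<sigma> k MM)"
    unfolding UJQSC_def by blast
  have conn: "quasi_strongly_connected N {(j,i). i<N \<and> j<N \<and> (\<exists>l\<in>{k..k+MM}. Ed l j i)}" for k
    using MM(2)[of k] unfolding union_edges_def Ed_def .
  from consensus[where V=V and Dd=Dd and Ed=Ed and N=N and M=MM and \<beta>=\<beta>, OF assms(1) bpos ble1 Dd0 Dsum up[unfolded Mx_def] lo[unfolded Mn_def] conn]
  obtain U where U: "\<forall>i<N. (\<lambda>k. V i k) \<longlonglongrightarrow> U" by blast
  define p where "p = char_b m b"
  have pc: "coeff p j = (if j = n then 1 else if j < n then complex_of_real (b (j+1)) else 0)" for j
    unfolding p_def m by (rule coeff_char_b)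
  have pdeg: "degree p < Suc n"
  proof -
    have "degree p \<le> n" by (rule degree_le) (auto simp: pc)
    thus ?thesis by simp
  qed
  have p0: "p \<noteq> 0" using pc[of n] by auto
  have proots: "\<And>s. poly p s = 0 \<Longrightarrow> cmod s < 1" using assms(12) unfolding p_def by blast
  define Lc where "Lc = complex_of_real U / poly p 1"
  have wconv: "(\<lambda>k. w i k) \<longlonglongrightarrow> Re Lc" if i: "i < N" for i
  proof -
    define W where "W = (\<lambda>k. complex_of_real (w i k))"
    have popW: "pop p W k = complex_of_real (V i k)" for k
    proof -
      have xc: "x i k \<in> carrier_vec (Suc n)" using carr[OF i] m by blast
      have "pop p W k = (\<Sum>j<Suc n. coeff p j * W (k+j))" by (rule pop_ext[OF pdeg])
      also have "\<dots> = (\<Sum>j<n. complex_of_real (b (j+1)) * W (k+j)) + W (k+n)"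
        by (simp add: pc)
      moreover have "V i k = (\<Sum>l<n. b (l+1) * x i k $ l) + x i k $ n"
        unfolding V_def m by (rule K5_expand[OF xc])
      moreover have "\<dots> = (\<Sum>l<n. b (l+1) * w i (k+l)) + w i (k+n)"
        using xw[OF i] m by simp
      ultimately show ?thesis unfolding W_def by simp
    qed
    have "(\<lambda>k. pop p W k) \<longlonglongrightarrow> complex_of_real U"
      unfolding popW using U i by (intro tendsto_of_real) auto
    from poly_rec_conv[OF p0 proots this] have "W \<longlonglongrightarrow> Lc" unfolding Lc_def .
    from tendsto_Re[OF this] show ?thesis unfolding W_def by simp
  qed
  show ?thesis
  proof (intro exI[of _ "vec m (\<lambda>_. Re Lc)"] conjI allI impI)
    show "vec m (\<lambda>_. Re Lc) \<in> carrier_vec m" by (rule vec_carrier)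
    fix i l assume i: "i < N" and l: "l < m"
    have c1: "(\<lambda>k. w i (k + l)) \<longlonglongrightarrow> Re Lc" by (rule LIMSEQ_ignore_initial_segment[OF wconv[OF i]])
    have c2: "(\<lambda>k. x i k $ l) = (\<lambda>k. w i (k + l))" by (rule ext) (rule xw[OF i l])
    have c3: "vec m (\<lambda>_. Re Lc) $ l = Re Lc" using l by (rule index_vec)
    show "(\<lambda>k. x i k $ l) \<longlonglongrightarrow> vec m (\<lambda>_. Re Lc) $ l" unfolding c2 c3 by (rule c1)
  qed
qed

end
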